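(* Let $C\subset\mathbb R^3$ be a non-closed embedded curve of length $l>0$ with nowhere vanishing curvature and orientation-compatible arc-length parametrization $\mathbf c:[-l/2,l/2]\to\mathbb R^3$, and let $F\in\mathcal D_*(C)$ be a normal form with $F(s,0)=\mathbf c(s)$. Then at each point of $C$ the ruling direction of the inverse $F_*$ is linearly independent of that of $F$, i.e. $\xi_F(s)$ and $\xi_{F_*}(-s)$ are linearly independent for every $s$. In particular, $F(\Omega_\epsilon)\cap F_*(\Omega_\epsilon)=C$ for all sufficiently small $\epsilon>0$.
   Context: $-C$ is $C$ with the opposite orientation; $\kappa$ is the curvature of $\mathbf c$; $\Omega_\epsilon:=[-l/2,l/2]\times(-\epsilon,\epsilon)$. A developable strip along $C$ is the germ of a $C^\infty$ embedding $f(u,v)=f(u,0)+v\,\xi_f(u)$ with $\mathbf c_f(u)=f(u,0)$ parametrizing $C$, $\xi_f$ unit (the ruling vector field), and zero Gaussian curvature; with the Frenet frame $(\mathbf e,\mathbf n,\mathbf b)$ of $\mathbf c_f$ write $\xi_f=\cos\beta_f\,\mathbf e+\sin\beta_f(\cos\alpha_f\,\mathbf n+\sin\alpha_f\,\mathbf b)$. $\mathcal D(C)$: strips with $\mathbf c_f$ inducing the orientation of $C$ and $0<|\cos\alpha_f|<1$, normalized by $0<|\alpha_f|<\pi/2$ (first angular function), $0<\beta_f<\pi$. Geodesic curvature $\mu_f=\kappa_f\cos\alpha_f$; admissible ($\in\mathcal D_*(C)$) if $\mu_f<\min\kappa_f$ everywhere. A normal form is such a strip $F(s,v)$ defined near $[-l/2,l/2]\times\{0\}$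 with $s\mapsto F(s,0)$ an arc-length parametrization of $C$ (either orientation); it is determined by that parametrization and its first angular function, which can be any smooth function into $(-\pi/2,\pi/2)\setminus\{0\}$. Inverse: $F_*\in\mathcal D_*(-C)$ is the normal form with $F_*(s,0)=\mathbf c(-s)$ whose first angular function (w.r.t. the Frenet frame of $s\mapsto\mathbf c(-s)$) has the same sign as $\alpha_F(s)$ and satisfies $\kappa(-s)\cos\alpha_{F_*}(s)=\kappa(s)\cos\alpha_F(s)$. *)

theory Defs
  imports "HOL-Analysis.Analysis"
begin

definition cderiv :: "(real \<Rightarrow> 'a::real_normed_vector) \<Rightarrow> real \<Rightarrow> 'a" where
  "cderiv g = (\<lambda>t. vector_derivative g (at t))"

definition smooth_curve_on :: "real set \<Rightarrow> (real \<Rightarrow> 'a::real_normed_vector) \<Rightarrow> bool" where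
  "smooth_curve_on S g \<longleftrightarrow>
     (\<forall>k. continuous_on S ((cderiv ^^ k) g) \<and> (\<forall>t\<in>S. ((cderiv ^^ k) g) differentiable (at t)))"

definition pu :: "(real \<times> real \<Rightarrow> 'a::real_normed_vector) \<Rightarrow> real \<times> real \<Rightarrow> 'a" where
  "pu f = (\<lambda>p. vector_derivative (\<lambda>u. f (u, snd p)) (at (fst p)))"

definition pv :: "(real \<times> real \<Rightarrow> 'a::real_normed_vector) \<Rightarrow> real \<times> real \<Rightarrow> 'a" where
  "pv f = (\<lambda>p. vector_derivative (\<lambda>v. f (fst p, v)) (at (snd p)))"

fun iter_partial :: "bool list \<Rightarrow> (real \<times> real \<Rightarrow> 'a::real_normed_vector) \<Rightarrow> real \<times> real \<Rightarrow> 'a" where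
  "iter_partial [] f = f"
| "iter_partial (d # ds) f = (if d then pu else pv) (iter_partial ds f)"

definition smooth2_on :: "(real \<times> real) set \<Rightarrow> (real \<times> real \<Rightarrow> 'a::real_normed_vector) \<Rightarrow> bool" where
  "smooth2_on U f \<longleftrightarrow>
     (\<forall>ds. continuous_on U (iter_partial ds f) \<and>
       (\<forall>p\<in>U. (\<lambda>u. iter_partial ds f (u, snd p)) differentiable (at (fst p)) \<and>
               (\<lambda>v. iter_partial ds f (fst p, v)) differentiable (at (snd p))))"

definition unit_normal :: "(real \<times> real \<Rightarrow> real^3) \<Rightarrow> real \<times> real \<Rightarrow> real^3" where
  "unit_normal f p = (1 / norm (cross3 (pu f p) (pv f p))) *\<^sub>R cross3 (pu f p) (pv f p)"

definition gauss_curv :: "(real \<times> real \<Rightarrow> real^3) \<Rightarrow> real \<times> real \<Rightarrow> real" where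
  "gauss_curv f p =
     (let fu = pu f p; fv = pv f p; \<nu> = unit_normal f p;
          E = fu \<bullet> fu; Fc = fu \<bullet> fv; G = fv \<bullet> fv;
          L = pu (pu f) p \<bullet> \<nu>; M = pv (pu f) p \<bullet> \<nu>; N = pv (pv f) p \<bullet> \<nu>
      in (L * N - M\<^sup>2) / (E * G - Fc\<^sup>2))"

definition ruling :: "(real \<times> real \<Rightarrow> real^3) \<Rightarrow> real \<Rightarrow> real^3" where
  "ruling F u = pv F (u, 0)"

text \<open>F (a total function; only its germ along I x {0} matters) is a developable strip along
  the parameter segment I: on some open neighbourhood U of I x {0} it is a C-infinity embedding
  (smooth, injective immersion, homeomorphism onto its image) of the ruled form
  F(u,v) = F(u,0) + v xi(u) with xi unit, and of zero Gaussian curvature.\<close>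
definition dev_strip :: "real set \<Rightarrow> (real \<times> real \<Rightarrow> real^3) \<Rightarrow> bool" where
  "dev_strip I F \<longleftrightarrow>
     (\<exists>U. open U \<and> (\<forall>u\<in>I. (u, 0) \<in> U) \<and> smooth2_on U F \<and>
        inj_on F U \<and> (\<exists>g. homeomorphism U (F ` U) F g) \<and>
        (\<forall>p\<in>U. \<exists>D. (F has_derivative D) (at p) \<and> inj D) \<and>
        (\<forall>u v. (u, v) \<in> U \<longrightarrow> (u, 0) \<in> U \<and> F (u, v) = F (u, 0) + v *\<^sub>R ruling F u
                                \<and> norm (ruling F u) = 1) \<and>
        (\<forall>p\<in>U. gauss_curv F p = 0))"

definition tangent :: "(real \<Rightarrow> real^3) \<Rightarrow> real \<Rightarrow> real^3" where
  "tangent c s = cderiv c s"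

definition curvature :: "(real \<Rightarrow> real^3) \<Rightarrow> real \<Rightarrow> real" where
  "curvature c s = norm (cderiv (cderiv c) s)"

definition principal_normal :: "(real \<Rightarrow> real^3) \<Rightarrow> real \<Rightarrow> real^3" where
  "principal_normal c s = (1 / curvature c s) *\<^sub>R cderiv (cderiv c) s"

definition binormal :: "(real \<Rightarrow> real^3) \<Rightarrow> real \<Rightarrow> real^3" where
  "binormal c s = cross3 (tangent c s) (principal_normal c s)"

definition frame_vec :: "(real \<Rightarrow> real^3) \<Rightarrow> real \<Rightarrow> real \<Rightarrow> real \<Rightarrow> real^3" where
  "frame_vec c s \<alpha> \<beta> = cos \<beta> *\<^sub>R tangent c s +
     sin \<beta> *\<^sub>R (cos \<alpha> *\<^sub>R principal_normal c s + sin \<alpha> *\<^sub>R binormal c s)"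

definition first_angle :: "(real \<Rightarrow> real^3) \<Rightarrow> (real \<times> real \<Rightarrow> real^3) \<Rightarrow> real \<Rightarrow> real" where
  "first_angle c F s = (THE \<alpha>. \<exists>\<beta>. 0 < \<beta> \<and> \<beta> < pi \<and> 0 < \<bar>\<alpha>\<bar> \<and> \<bar>\<alpha>\<bar> < pi / 2 \<and>
                                  ruling F s = frame_vec c s \<alpha> \<beta>)"

definition param_int :: "real \<Rightarrow> real set" where
  "param_int l = {-l/2 .. l/2}"

definition normal_form :: "real \<Rightarrow> (real \<Rightarrow> real^3) \<Rightarrow> (real \<times> real \<Rightarrow> real^3) \<Rightarrow> bool" where
  "normal_form l c F \<longleftrightarrow>
     dev_strip (param_int l) F \<and> (\<forall>s\<in>param_int l. F (s, 0) = c s) \<and>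
     (\<forall>s\<in>param_int l. \<exists>\<alpha> \<beta>. 0 < \<beta> \<and> \<beta> < pi \<and> 0 < \<bar>\<alpha>\<bar> \<and> \<bar>\<alpha>\<bar> < pi / 2 \<and>
                              ruling F s = frame_vec c s \<alpha> \<beta>)"

definition geod_curv :: "(real \<Rightarrow> real^3) \<Rightarrow> (real \<times> real \<Rightarrow> real^3) \<Rightarrow> real \<Rightarrow> real" where
  "geod_curv c F s = curvature c s * cos (first_angle c F s)"

text \<open>Admissible (D_* ): mu_F < min kappa everywhere.\<close>
definition admissible :: "real \<Rightarrow> (real \<Rightarrow> real^3) \<Rightarrow> (real \<times> real \<Rightarrow> real^3) \<Rightarrow> bool" where
  "admissible l c F \<longleftrightarrow> (\<forall>s\<in>param_int l. \<forall>t\<in>param_int l. geod_curv c F s < curvature c t)"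

definition is_inverse :: "real \<Rightarrow> (real \<Rightarrow> real^3) \<Rightarrow> (real \<times> real \<Rightarrow> real^3)
                          \<Rightarrow> (real \<times> real \<Rightarrow> real^3) \<Rightarrow> bool" where
  "is_inverse l c F Fs \<longleftrightarrow>
     normal_form l (\<lambda>s. c (- s)) Fs \<and>
     (\<forall>s\<in>param_int l.
        sgn (first_angle (\<lambda>t. c (- t)) Fs s) = sgn (first_angle c F s) \<and>
        curvature c (- s) * cos (first_angle (\<lambda>t. c (- t)) Fs s) =
          curvature c s * cos (first_angle c F s))"

definition Omega :: "real \<Rightarrow> real \<Rightarrow> (real \<times> real) set" where
  "Omega l \<epsilon> = Sigma (param_int l) (\<lambda>_. {-\<epsilon> <..< \<epsilon>})"

end

theory Submission
  imports Defs
begin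

lemma smooth_D:
  assumes "smooth_curve_on S c" "t \<in> S"
  shows "(c has_vector_derivative cderiv c t) (at t)"
    "(cderiv c has_vector_derivative cderiv (cderiv c) t) (at t)"
    "continuous_on S c" "continuous_on S (cderiv c)" "continuous_on S (cderiv (cderiv c))"
proof -
  have a: "\<And>k. continuous_on S ((cderiv ^^ k) c) \<and> (\<forall>t\<in>S. ((cderiv ^^ k) c) differentiable (at t))"
    using assms(1) unfolding smooth_curve_on_def by blast
  from a[of 0] a[of 1] a[of 2] assms(2) show
    "(c has_vector_derivative cderiv c t) (at t)"
    "(cderiv c has_vector_derivative cderiv (cderiv c) t) (at t)"
    "continuous_on S c" "continuous_on S (cderiv c)" "continuous_on S (cderiv (cderiv c))"
    by (auto simp: numeral_2_eq_2 cderiv_def vector_derivative_works[symmetric])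
qed

lemma e_perp:
  assumes "l > 0" "param_int l \<subseteq> S" "smooth_curve_on S c"
    "\<forall>s\<in>param_int l. norm (cderiv c s) = 1" "s \<in> param_int l"
  shows "cderiv c s \<bullet> cderiv (cderiv c) s = 0"
proof -
  let ?e = "cderiv c s" and ?k = "cderiv (cderiv c) s"
  have sS: "s \<in> S" using assms by auto
  have d: "(cderiv c has_derivative (\<lambda>h. h *\<^sub>R ?k)) (at s)"
    using smooth_D(2)[OF assms(3) sS] by (simp add: has_vector_derivative_def)
  have "((\<lambda>x. cderiv c x \<bullet> cderiv c x) has_derivative (\<lambda>h. cderiv c s \<bullet> (h *\<^sub>R ?k) + (h *\<^sub>R ?k) \<bullet> cderiv c s)) (at s)"
    by (rule has_derivative_inner[OF d d])
  then have "((\<lambda>x. cderiv c x \<bullet> cderiv c x) has_vector_derivative (2 * (?e \<bullet> ?k))) (at s)"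
    unfolding has_vector_derivative_def
    by (rule has_derivative_eq_rhs) (auto simp: inner_commute algebra_simps)
  then have g1: "((\<lambda>x. cderiv c x \<bullet> cderiv c x) has_vector_derivative (2 * (?e \<bullet> ?k))) (at s within cbox (-l/2) (l/2))"
    by (rule has_vector_derivative_at_within)
  have g2: "((\<lambda>x. cderiv c x \<bullet> cderiv c x) has_vector_derivative 0) (at s within cbox (-l/2) (l/2))"
  proof (rule has_vector_derivative_transform_within[where f="\<lambda>_. 1" and d=1])
    show "((\<lambda>_. 1::real) has_vector_derivative 0) (at s within cbox (- l / 2) (l / 2))" by (rule derivative_eq_intros) auto
    show "s \<in> cbox (- l / 2) (l / 2)" using assms(5) by (simp add: param_int_def)
    fix x assume "x \<in> cbox (- l / 2) (l / 2)"
    then have "norm (cderiv c x) = 1" using assms(4) by (simp add: param_int_def)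
    then show "1 = cderiv c x \<bullet> cderiv c x" by (metis norm_eq_1)
  qed auto
  have "2 * (?e \<bullet> ?k) = 0"
    by (rule vector_derivative_unique_within_closed_interval[OF _ _ g1 g2]) (use assms in \<open>auto simp: param_int_def\<close>)
  then show ?thesis by simp
qed

lemma rev_D1:
  assumes "smooth_curve_on S c" "- t \<in> S"
  shows "((\<lambda>x. c (- x)) has_vector_derivative - cderiv c (- t)) (at t)"
proof -
  have "((c \<circ> uminus) has_vector_derivative (-1) *\<^sub>R cderiv c (- t)) (at t)"
    by (rule vector_diff_chain_at) (auto intro!: derivative_eq_intros smooth_D(1)[OF assms])
  then show ?thesis by (simp add: o_def)
qed

lemma rev_D:
  assumes "smooth_curve_on S c" "open S" "- t \<in> S"
  shows "cderiv (\<lambda>x. c (- x)) t = - cderiv c (- t)"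
    "cderiv (cderiv (\<lambda>x. c (- x))) t = cderiv (cderiv c) (- t)"
proof -
  have e: "\<And>y. -y \<in> S \<Longrightarrow> cderiv (\<lambda>x. c (- x)) y = - cderiv c (- y)"
    unfolding cderiv_def[of "\<lambda>x. c (- x)"]
    using rev_D1[OF assms(1)] vector_derivative_at by (metis cderiv_def)
  then show "cderiv (\<lambda>x. c (- x)) t = - cderiv c (- t)" using assms by blast
  have "((cderiv c \<circ> uminus) has_vector_derivative (-1) *\<^sub>R cderiv (cderiv c) (- t)) (at t)"
    by (rule vector_diff_chain_at) (auto intro!: derivative_eq_intros smooth_D(2)[OF assms(1,3)])
  then have "((\<lambda>x. - cderiv c (- x)) has_vector_derivative cderiv (cderiv c) (- t)) (at t)"
    using has_vector_derivative_minus by (fastforce simp: o_def)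
  then have "(cderiv (\<lambda>x. c (- x)) has_vector_derivative cderiv (cderiv c) (- t)) (at t)"
  proof (rule has_vector_derivative_transform_within_open[where S="uminus -` S"])
    show "open (uminus -` S)" using assms(2) by (intro open_vimage continuous_intros) auto
  qed (use assms e in auto)
  then show "cderiv (cderiv (\<lambda>x. c (- x))) t = cderiv (cderiv c) (- t)"
    by (simp add: cderiv_def[of "cderiv _"] vector_derivative_at)
qed

lemma triple_cyc: "(x::real^3) \<bullet> cross3 y z = cross3 x y \<bullet> z"
  by (simp add: cross3_simps)

lemma frame_dots:
  fixes e n :: "real^3"
  assumes "e \<bullet> e = 1" "n \<bullet> n = 1" "e \<bullet> n = 0"
  shows "cross3 e n \<bullet> cross3 e n = 1" "e \<bullet> cross3 e n = 0" "n \<bullet> cross3 e n = 0"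
  using norm_cross_dot[of e n] assms by (simp_all add: power2_norm_eq_inner norm_eq_sqrt_inner dot_cross_self)

lemma frame_triple:
  fixes e n :: "real^3"
  assumes "e \<bullet> e = 1" "n \<bullet> n = 1" "e \<bullet> n = 0"
  shows "e \<bullet> cross3 (x1 *\<^sub>R e + x2 *\<^sub>R n + x3 *\<^sub>R cross3 e n) (y1 *\<^sub>R e + y2 *\<^sub>R n + y3 *\<^sub>R cross3 e n) = x2*y3 - x3*y2"
proof -
  have bb: "cross3 e n \<bullet> cross3 e n = 1" using frame_dots[OF assms] by simp
  have t1: "e \<bullet> cross3 n (cross3 e n) = 1" using triple_cyc[of e n "cross3 e n"] bb by simp
  have t2: "e \<bullet> cross3 (cross3 e n) n = -1" using t1 cross_skew[of "cross3 e n" n] by simp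
  show ?thesis
    by (simp add: cross_add_left cross_add_right cross_mult_left cross_mult_right inner_add_right dot_cross_self t1 t2 algebra_simps)
qed

definition fv :: "real^3 \<Rightarrow> real^3 \<Rightarrow> real \<Rightarrow> real \<Rightarrow> real^3" where
  "fv e n a b = cos b *\<^sub>R e + sin b *\<^sub>R (cos a *\<^sub>R n + sin a *\<^sub>R cross3 e n)"

lemma fv_dots:
  fixes e n :: "real^3"
  assumes "e \<bullet> e = 1" "n \<bullet> n = 1" "e \<bullet> n = 0"
  shows "fv e n a b \<bullet> e = cos b" "fv e n a b \<bullet> n = sin b * cos a" "fv e n a b \<bullet> cross3 e n = sin b * sin a"
proof -
  note d = frame_dots[OF assms]
  have x: "n \<bullet> e = 0" "cross3 e n \<bullet> e = 0" "cross3 e n \<bullet> n = 0" "e \<bullet> cross3 e n = 0" "n \<bullet> cross3 e n = 0"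
    using d assms by (simp_all add: inner_commute)
  show "fv e n a b \<bullet> e = cos b" "fv e n a b \<bullet> n = sin b * cos a" "fv e n a b \<bullet> cross3 e n = sin b * sin a"
    by (simp_all add: fv_def inner_add_left x assms d)
qed

lemma fv_unique:
  fixes e n :: "real^3"
  assumes "e \<bullet> e = 1" "n \<bullet> n = 1" "e \<bullet> n = 0"
    and "0 < b1" "b1 < pi" "\<bar>a1\<bar> < pi/2" "0 < b2" "b2 < pi" "\<bar>a2\<bar> < pi/2"
    and "fv e n a1 b1 = fv e n a2 b2"
  shows "a1 = a2"
proof -
  have "cos b1 = cos b2" using fv_dots(1)[OF assms(1-3), of a1 b1] fv_dots(1)[OF assms(1-3), of a2 b2] assms(10) by simp
  then have "b1 = b2" using assms by (metis arccos_cos less_imp_le)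
  moreover have "sin b1 > 0" using assms by (simp add: sin_gt_zero)
  moreover have "sin b1 * sin a1 = sin b2 * sin a2" using fv_dots(3)[OF assms(1-3), of a1 b1] fv_dots(3)[OF assms(1-3), of a2 b2] assms(10) by simp
  ultimately have "sin a1 = sin a2" by simp
  moreover have "arcsin (sin a1) = a1" "arcsin (sin a2) = a2"
    using assms by (auto intro!: arcsin_sin)
  ultimately show ?thesis by metis
qed

lemma frame_vec_fv: "frame_vec c s a b = fv (tangent c s) (principal_normal c s) a b"
  by (simp add: frame_vec_def fv_def binormal_def)

lemma first_angle_eq:
  assumes "tangent c s \<bullet> tangent c s = 1" "principal_normal c s \<bullet> principal_normal c s = 1"
    "tangent c s \<bullet> principal_normal c s = 0"
    and "0 < b" "b < pi" "0 < \<bar>a\<bar>" "\<bar>a\<bar> < pi/2" "ruling F s = frame_vec c s a b"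
  shows "first_angle c F s = a"
  unfolding first_angle_def
proof (rule the_equality)
  show "\<exists>\<beta>>0. \<beta> < pi \<and> 0 < \<bar>a\<bar> \<and> \<bar>a\<bar> < pi / 2 \<and> ruling F s = frame_vec c s a \<beta>" using assms by blast
  fix x assume "\<exists>\<beta>>0. \<beta> < pi \<and> 0 < \<bar>x\<bar> \<and> \<bar>x\<bar> < pi / 2 \<and> ruling F s = frame_vec c s x \<beta>"
  then obtain b2 where "b2 > 0" "b2 < pi" "\<bar>x\<bar> < pi/2" "ruling F s = frame_vec c s x b2" by blast
  then show "x = a" using fv_unique[OF assms(1-3), of b a b2 x] assms by (simp add: frame_vec_fv)
qed

lemma sgn_sin: assumes "\<bar>a\<bar> < pi" shows "sgn (sin a) = sgn (a::real)"
proof (cases "a > 0")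
  case True then show ?thesis using assms sin_gt_zero[of a] by simp
next
  case False
  show ?thesis
  proof (cases "a = 0")
    case False
    then have "a < 0" using \<open>\<not> a > 0\<close> by simp
    then have "sin (-a) > 0" using assms by (intro sin_gt_zero) auto
    then show ?thesis using \<open>a < 0\<close> by simp
  qed simp
qed

lemma dev_strip_facts:
  assumes "dev_strip I F" "compact I"
  shows "continuous_on I (ruling F)" "\<And>u. u \<in> I \<Longrightarrow> norm (ruling F u) = 1"
    "\<exists>d>0. \<forall>s\<in>I. \<forall>v. \<bar>v\<bar> < d \<longrightarrow> F (s, v) = F (s, 0) + v *\<^sub>R ruling F s"
proof -
  obtain U where U: "open U" "\<forall>u\<in>I. (u, 0) \<in> U" "smooth2_on U F"
    "\<forall>u v. (u, v) \<in> U \<longrightarrow> (u, 0) \<in> U \<and> F (u, v) = F (u, 0) + v *\<^sub>R ruling F u \<and> norm (ruling F u) = 1"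
    using assms(1) unfolding dev_strip_def by blast
  have "continuous_on U (iter_partial [False] F)" using U(3) unfolding smooth2_on_def by blast
  then have cU: "continuous_on U (pv F)" by simp
  have "continuous_on I (\<lambda>u. pv F (u, 0))"
    by (rule continuous_on_compose2[OF cU]) (use U(2) in \<open>auto intro!: continuous_intros\<close>)
  then show "continuous_on I (ruling F)" by (simp add: ruling_def[abs_def])
  show "\<And>u. u \<in> I \<Longrightarrow> norm (ruling F u) = 1" using U by blast
  have cA: "compact ((\<lambda>u. (u, 0::real)) ` I)"
    by (rule compact_continuous_image) (auto intro!: continuous_intros assms(2))
  obtain d where d: "d > 0" "(\<Union>x\<in>(\<lambda>u. (u, 0::real)) ` I. ball x d) \<subseteq> U"
    using compact_subset_open_imp_ball_epsilon_subset[OF cA U(1)] U(2) by blast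
  have "\<forall>s\<in>I. \<forall>v. \<bar>v\<bar> < d \<longrightarrow> F (s, v) = F (s, 0) + v *\<^sub>R ruling F s"
  proof (intro ballI allI impI)
    fix s v assume "s \<in> I" "\<bar>v\<bar> < d"
    then have "(s, v) \<in> ball (s, 0) d" by (simp add: dist_Pair_Pair dist_real_def)
    then have "(s, v) \<in> U" using d \<open>s \<in> I\<close> by blast
    then show "F (s, v) = F (s, 0) + v *\<^sub>R ruling F s" using U(4) by blast
  qed
  then show "\<exists>d>0. \<forall>s\<in>I. \<forall>v. \<bar>v\<bar> < d \<longrightarrow> F (s, v) = F (s, 0) + v *\<^sub>R ruling F s" using d by blast
qed

lemma sign_const:
  fixes \<phi> :: "real \<Rightarrow> real"
  assumes "continuous_on {-a..a} \<phi>" "\<forall>s\<in>{-a..a}. \<phi> s \<noteq> 0" "s \<in> {-a..a}"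
  shows "sgn (\<phi> s) = sgn (\<phi> (-s))"
proof (rule ccontr)
  assume ne: "sgn (\<phi> s) \<noteq> sgn (\<phi> (-s))"
  define p q where "p = min s (-s)" and "q = max s (-s)"
  have pq: "p \<le> q" "{p..q} \<subseteq> {-a..a}" "p \<in> {-a..a}" "q \<in> {-a..a}" using assms(3) by (auto simp: p_def q_def)
  have c: "continuous_on {p..q} \<phi>" using continuous_on_subset[OF assms(1) pq(2)] .
  have "\<phi> p * \<phi> q < 0"
  proof -
    have "{p, q} = {s, -s}" by (auto simp: p_def q_def)
    have "\<phi> s * \<phi> (-s) < 0" using ne assms(2,3)
      by (smt (verit, best) atLeastAtMost_iff minus_le_iff mult_neg_pos mult_pos_neg sgn_neg sgn_pos zero_less_mult_iff)
    then show ?thesis by (cases "s \<le> -s") (auto simp: p_def q_def min_def max_def mult.commute)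
  qed
  then have "\<exists>x\<ge>p. x \<le> q \<and> \<phi> x = 0"
  proof (cases "\<phi> p < 0")
    case True
    then have "\<phi> q > 0" using \<open>\<phi> p * \<phi> q < 0\<close> by (simp add: mult_less_0_iff)
    then show ?thesis using IVT'[of \<phi> p 0 q] True pq c by auto
  next
    case False
    then have "\<phi> p > 0" "\<phi> q < 0" using \<open>\<phi> p * \<phi> q < 0\<close> by (auto simp: mult_less_0_iff)
    then show ?thesis using IVT2'[of \<phi> q 0 p] pq c by auto
  qed
  then show False using assms(2) pq by auto
qed

lemma mvt_dot:
  assumes "a < b" "\<And>x. a \<le> x \<Longrightarrow> x \<le> b \<Longrightarrow> (c has_vector_derivative cderiv c x) (at x)"
  shows "\<exists>r. a < r \<and> r < b \<and> c b \<bullet> N - c a \<bullet> N = (b - a) * (cderiv c r \<bullet> N)"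
proof -
  have "\<And>x. a \<le> x \<Longrightarrow> x \<le> b \<Longrightarrow> ((\<lambda>x. c x \<bullet> N) has_real_derivative (cderiv c x \<bullet> N)) (at x)"
  proof -
    fix x assume "a \<le> x" "x \<le> b"
    then have "(c has_derivative (\<lambda>h. h *\<^sub>R cderiv c x)) (at x)" using assms(2) by (simp add: has_vector_derivative_def)
    then have "((\<lambda>x. c x \<bullet> N) has_derivative (\<lambda>h. (h *\<^sub>R cderiv c x) \<bullet> N)) (at x)"
      by (rule has_derivative_inner_left)
    then show "((\<lambda>x. c x \<bullet> N) has_real_derivative (cderiv c x \<bullet> N)) (at x)"
      unfolding has_field_derivative_def by (rule has_derivative_eq_rhs) (auto simp: fun_eq_iff)
  qed
  then show ?thesis using MVT2[OF assms(1), of "\<lambda>x. c x \<bullet> N" "\<lambda>x. cderiv c x \<bullet> N"] by blast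
qed

theorem proposition3p4:
  fixes l :: real and c :: "real \<Rightarrow> real^3" and S :: "real set"
    and F Fs :: "real \<times> real \<Rightarrow> real^3"
  assumes "l > 0"
    and "open S" and "param_int l \<subseteq> S" and "smooth_curve_on S c"
    and "\<forall>s\<in>param_int l. norm (cderiv c s) = 1"
    and "\<forall>s\<in>param_int l. curvature c s > 0"
    and "inj_on c (param_int l)"
    and "normal_form l c F" and "admissible l c F"
    and "is_inverse l c F Fs"
  shows "(\<forall>s\<in>param_int l. \<forall>a b::real.
            a *\<^sub>R ruling F s + b *\<^sub>R ruling Fs (- s) = 0 \<longrightarrow> a = 0 \<and> b = 0) \<and>
         (\<exists>\<epsilon>0>0. \<forall>\<epsilon>. 0 < \<epsilon> \<and> \<epsilon> < \<epsilon>0 \<longrightarrow>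
            F ` Omega l \<epsilon> \<inter> Fs ` Omega l \<epsilon> = c ` param_int l)"
proof -
  define I where "I = param_int l"
  have I_eq: "I = {-(l/2)..l/2}" by (simp add: I_def param_int_def)
  have Isym: "\<And>s. s \<in> I \<Longrightarrow> -s \<in> I" by (auto simp: I_eq)
  have IS: "\<And>s. s \<in> I \<Longrightarrow> s \<in> S" using assms(3) I_def by auto
  have cI: "compact I" by (simp add: I_eq)
  have Ine: "I \<noteq> {}" using assms(1) by (auto simp: I_eq)
  note sm = assms(4)
  have zS: "0 \<in> S" using IS assms(1) by (simp add: I_eq)
  define c' where "c' = (\<lambda>t. c (- t))"
  have nT: "\<And>s. s \<in> I \<Longrightarrow> tangent c s \<bullet> tangent c s = 1"
    using assms(5) I_def by (simp add: tangent_def norm_eq_1)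
  have kpos: "\<And>s. s \<in> I \<Longrightarrow> curvature c s > 0" using assms(6) I_def by auto
  have nP: "\<And>s. s \<in> I \<Longrightarrow> principal_normal c s \<bullet> principal_normal c s = 1"
  proof -
    fix s assume "s \<in> I"
    then have k: "norm (cderiv (cderiv c) s) > 0" using kpos curvature_def by metis
    then show "principal_normal c s \<bullet> principal_normal c s = 1"
      by (simp add: principal_normal_def curvature_def power2_norm_eq_inner[symmetric] power2_eq_square)
  qed
  have TP: "\<And>s. s \<in> I \<Longrightarrow> tangent c s \<bullet> principal_normal c s = 0"
    using e_perp[OF assms(1,3,4,5)] I_def by (simp add: tangent_def principal_normal_def)
  have T': "\<And>t. t \<in> I \<Longrightarrow> tangent c' t = - tangent c (-t)"
    using rev_D(1)[OF sm assms(2)] IS Isym by (simp add: c'_def tangent_def)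
  have K': "\<And>t. t \<in> I \<Longrightarrow> curvature c' t = curvature c (-t)"
    using rev_D(2)[OF sm assms(2)] IS Isym by (simp add: c'_def curvature_def)
  have P': "\<And>t. t \<in> I \<Longrightarrow> principal_normal c' t = principal_normal c (-t)"
    using rev_D(2)[OF sm assms(2)] IS Isym K' by (simp add: c'_def principal_normal_def)
  have nT': "\<And>t. t \<in> I \<Longrightarrow> tangent c' t \<bullet> tangent c' t = 1" using T' nT Isym by simp
  have nP': "\<And>t. t \<in> I \<Longrightarrow> principal_normal c' t \<bullet> principal_normal c' t = 1" using P' nP Isym by simp
  have TP': "\<And>t. t \<in> I \<Longrightarrow> tangent c' t \<bullet> principal_normal c' t = 0" using T' P' TP Isym by simp
  have nfF: "dev_strip I F" "\<forall>s\<in>I. F (s, 0) = c s"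
    "\<forall>s\<in>I. \<exists>\<alpha> \<beta>. 0 < \<beta> \<and> \<beta> < pi \<and> 0 < \<bar>\<alpha>\<bar> \<and> \<bar>\<alpha>\<bar> < pi / 2 \<and> ruling F s = frame_vec c s \<alpha> \<beta>"
    using assms(8) unfolding normal_form_def I_def by blast+
  have nfFs: "dev_strip I Fs" "\<forall>s\<in>I. Fs (s, 0) = c' s"
    "\<forall>s\<in>I. \<exists>\<alpha> \<beta>. 0 < \<beta> \<and> \<beta> < pi \<and> 0 < \<bar>\<alpha>\<bar> \<and> \<bar>\<alpha>\<bar> < pi / 2 \<and> ruling Fs s = frame_vec c' s \<alpha> \<beta>"
    using assms(10) unfolding normal_form_def is_inverse_def I_def c'_def by blast+
  have invsg: "\<forall>s\<in>I. sgn (first_angle c' Fs s) = sgn (first_angle c F s)"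
    using assms(10) unfolding is_inverse_def I_def c'_def by blast
  obtain al be where ab: "\<forall>s\<in>I. 0 < be s \<and> be s < pi \<and> 0 < \<bar>al s\<bar> \<and> \<bar>al s\<bar> < pi / 2 \<and> ruling F s = frame_vec c s (al s) (be s)"
    using nfF(3) by metis
  obtain al' be' where ab': "\<forall>s\<in>I. 0 < be' s \<and> be' s < pi \<and> 0 < \<bar>al' s\<bar> \<and> \<bar>al' s\<bar> < pi / 2 \<and> ruling Fs s = frame_vec c' s (al' s) (be' s)"
    using nfFs(3) by metis
  have fa: "\<And>s. s \<in> I \<Longrightarrow> first_angle c F s = al s"
    using first_angle_eq nT nP TP ab by metis
  have fa': "\<And>s. s \<in> I \<Longrightarrow> first_angle c' Fs s = al' s"
    using first_angle_eq nT' nP' TP' ab' by metis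
  have sg: "\<And>s. s \<in> I \<Longrightarrow> sgn (al' s) = sgn (al s)" using invsg fa fa' by metis
  define T where "T = tangent c"
  define P where "P = principal_normal c"
  define B where "B = (\<lambda>s. cross3 (T s) (P s))"
  have xi: "\<And>s. s \<in> I \<Longrightarrow> ruling F s = cos (be s) *\<^sub>R T s + (sin (be s) * cos (al s)) *\<^sub>R P s + (sin (be s) * sin (al s)) *\<^sub>R B s"
  proof -
    fix s assume s: "s \<in> I"
    have "ruling F s = frame_vec c s (al s) (be s)" using ab s by blast
    then show "ruling F s = cos (be s) *\<^sub>R T s + (sin (be s) * cos (al s)) *\<^sub>R P s + (sin (be s) * sin (al s)) *\<^sub>R B s"
      by (simp add: frame_vec_def T_def P_def B_def binormal_def scaleR_add_right add.assoc)
  qed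
  have eta: "\<And>s. s \<in> I \<Longrightarrow> ruling Fs (-s) = (- cos (be' (-s))) *\<^sub>R T s + (sin (be' (-s)) * cos (al' (-s))) *\<^sub>R P s + (- (sin (be' (-s)) * sin (al' (-s)))) *\<^sub>R B s"
  proof -
    fix s assume s: "s \<in> I"
    then have "ruling Fs (-s) = frame_vec c' (-s) (al' (-s)) (be' (-s))" using ab' Isym by blast
    also have "\<dots> = fv (- T s) (P s) (al' (-s)) (be' (-s))"
      using T'[OF Isym[OF s]] P'[OF Isym[OF s]] by (simp add: frame_vec_fv T_def P_def)
    finally show "ruling Fs (-s) = (- cos (be' (-s))) *\<^sub>R T s + (sin (be' (-s)) * cos (al' (-s))) *\<^sub>R P s + (- (sin (be' (-s)) * sin (al' (-s)))) *\<^sub>R B s"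
      by (simp add: fv_def B_def scaleR_add_right scaleR_diff_right add.assoc)
  qed
  have cT: "continuous_on I T"
  proof -
    have "continuous_on I (cderiv c)" by (rule continuous_on_subset[OF smooth_D(4)[OF sm zS]]) (use IS in auto)
    moreover have "T = cderiv c" by (simp add: T_def tangent_def[abs_def])
    ultimately show ?thesis by simp
  qed
  have cK: "continuous_on I (cderiv (cderiv c))"
    by (rule continuous_on_subset[OF smooth_D(5)[OF sm zS]]) (use IS in auto)
  have cP: "continuous_on I P"
  proof -
    have "\<forall>s\<in>I. norm (cderiv (cderiv c) s) \<noteq> 0" using kpos by (simp add: curvature_def)
    then have "continuous_on I (\<lambda>s. (1 / norm (cderiv (cderiv c) s)) *\<^sub>R cderiv (cderiv c) s)"
      by (intro continuous_on_scaleR continuous_on_divide continuous_on_const continuous_on_norm cK) auto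
    then show ?thesis by (simp add: P_def principal_normal_def[abs_def] curvature_def)
  qed
  have cB: "continuous_on I B" unfolding B_def by (intro continuous_on_cross cT cP)
  note dsF = dev_strip_facts[OF nfF(1) cI]
  note dsFs = dev_strip_facts[OF nfFs(1) cI]
  have phi: "\<And>s. s \<in> I \<Longrightarrow> ruling F s \<bullet> B s = sin (be s) * sin (al s)"
  proof -
    fix s assume s: "s \<in> I"
    have "ruling F s = fv (T s) (P s) (al s) (be s)" using ab s by (simp add: frame_vec_fv T_def P_def)
    then show "ruling F s \<bullet> B s = sin (be s) * sin (al s)"
      using fv_dots(3)[OF nT[OF s] nP[OF s] TP[OF s]] by (simp add: B_def T_def P_def)
  qed
  have sbe: "\<And>s. s \<in> I \<Longrightarrow> sin (be s) > 0" using ab by (simp add: sin_gt_zero)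
  have sbe': "\<And>s. s \<in> I \<Longrightarrow> sin (be' s) > 0" using ab' by (simp add: sin_gt_zero)
  have sgphi: "\<And>s. s \<in> I \<Longrightarrow> sgn (ruling F s \<bullet> B s) = sgn (al s)"
  proof -
    fix s assume s: "s \<in> I"
    have "\<bar>al s\<bar> < pi" using ab s by auto
    then have "sgn (sin (al s)) = sgn (al s)" by (rule sgn_sin)
    then show "sgn (ruling F s \<bullet> B s) = sgn (al s)" using phi[OF s] sbe[OF s] by (simp add: sgn_mult)
  qed
  have alconst: "\<And>s. s \<in> I \<Longrightarrow> sgn (al (-s)) = sgn (al s)"
  proof -
    fix s assume s: "s \<in> I"
    have cphi: "continuous_on {-(l/2)..l/2} (\<lambda>s. ruling F s \<bullet> B s)"
      using continuous_on_inner[OF dsF(1) cB] by (simp add: I_eq)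
    have "\<forall>s\<in>{-(l/2)..l/2}. ruling F s \<bullet> B s \<noteq> 0"
    proof
      fix s assume "s \<in> {-(l/2)..l/2}"
      then have "s \<in> I" by (simp add: I_eq)
      then have e1: "sgn (ruling F s \<bullet> B s) = sgn (al s)" by (rule sgphi)
      have "0 < \<bar>al s\<bar>" using ab \<open>s \<in> I\<close> by blast
      then have "sgn (al s) \<noteq> 0" by (simp add: sgn_0_0)
      then show "ruling F s \<bullet> B s \<noteq> 0" using e1 by (metis sgn_zero)
    qed
    have "s \<in> {-(l/2)..l/2}" using s by (simp add: I_eq)
    from sign_const[OF cphi \<open>\<forall>s\<in>{-(l/2)..l/2}. ruling F s \<bullet> B s \<noteq> 0\<close> this]
    have "sgn (ruling F s \<bullet> B s) = sgn (ruling F (-s) \<bullet> B (-s))" .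
    then show "sgn (al (-s)) = sgn (al s)" using sgphi[OF s] sgphi[OF Isym[OF s]] by metis
  qed
  define D where "D = (\<lambda>s. T s \<bullet> cross3 (ruling F s) (ruling Fs (-s)))"
  have Dval: "\<And>s. s \<in> I \<Longrightarrow> D s = - (sin (be s) * sin (be' (-s)) * sin (al s + al' (-s)))"
  proof -
    fix s assume s: "s \<in> I"
    have "D s = (sin (be s) * cos (al s)) * (- (sin (be' (-s)) * sin (al' (-s)))) - (sin (be s) * sin (al s)) * (sin (be' (-s)) * cos (al' (-s)))"
      unfolding D_def xi[OF s] eta[OF s] B_def
      by (rule frame_triple) (use nT nP TP s in \<open>auto simp: T_def P_def\<close>)
    then show "D s = - (sin (be s) * sin (be' (-s)) * sin (al s + al' (-s)))" by (simp only: sin_add) (simp add: algebra_simps)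
  qed
  have Dnz: "\<And>s. s \<in> I \<Longrightarrow> D s \<noteq> 0"
  proof -
    fix s assume s: "s \<in> I"
    have same: "sgn (al' (-s)) = sgn (al s)" using sg[OF Isym[OF s]] alconst[OF s] by simp
    have b1: "\<bar>al s\<bar> < pi/2" "al s \<noteq> 0" "\<bar>al' (-s)\<bar> < pi/2" "al' (-s) \<noteq> 0" using ab ab' s Isym by auto
    have "sgn (al s + al' (-s)) \<noteq> 0"
    proof -
      have "(al s > 0 \<and> al' (-s) > 0) \<or> (al s < 0 \<and> al' (-s) < 0)" using same b1 by (auto simp: sgn_if split: if_splits)
      then show ?thesis by (auto simp: sgn_0_0)
    qed
    moreover have "sgn (sin (al s + al' (-s))) = sgn (al s + al' (-s))" using b1 by (intro sgn_sin) auto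
    ultimately have "sin (al s + al' (-s)) \<noteq> 0" by auto
    then show "D s \<noteq> 0" using Dval[OF s] sbe[OF s] sbe'[OF Isym[OF s]] by simp
  qed
  have part1: "\<forall>s\<in>I. \<forall>a b::real. a *\<^sub>R ruling F s + b *\<^sub>R ruling Fs (- s) = 0 \<longrightarrow> a = 0 \<and> b = 0"
  proof (intro ballI allI impI)
    fix s a b assume s: "s \<in> I" and eq: "a *\<^sub>R ruling F s + b *\<^sub>R ruling Fs (- s) = 0"
    have a0: "a = 0"
    proof (rule ccontr)
      assume "a \<noteq> 0"
      then have "ruling F s = (- b / a) *\<^sub>R ruling Fs (- s)" using eq
      proof -
        have "a *\<^sub>R ruling F s = - (b *\<^sub>R ruling Fs (- s))" using eq by (simp add: eq_neg_iff_add_eq_0)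
        then have "inverse a *\<^sub>R (a *\<^sub>R ruling F s) = inverse a *\<^sub>R (- (b *\<^sub>R ruling Fs (- s)))" by simp
        then show ?thesis using \<open>a \<noteq> 0\<close> by (simp add: divide_inverse mult.commute)
      qed
      then have "D s = 0" by (simp add: D_def cross_mult_left)
      then show False using Dnz s by blast
    qed
    then have "b *\<^sub>R ruling Fs (- s) = 0" using eq by simp
    moreover have "norm (ruling Fs (- s)) = 1" using dsFs(2) Isym s by blast
    ultimately show "a = 0 \<and> b = 0" using a0 by auto
  qed
  obtain d1 where d1: "d1 > 0" "\<forall>s\<in>I. \<forall>v. \<bar>v\<bar> < d1 \<longrightarrow> F (s, v) = F (s, 0) + v *\<^sub>R ruling F s"
    using dsF(3) by blast
  obtain d2 where d2: "d2 > 0" "\<forall>s\<in>I. \<forall>v. \<bar>v\<bar> < d2 \<longrightarrow> Fs (s, v) = Fs (s, 0) + v *\<^sub>R ruling Fs s"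
    using dsFs(3) by blast
  have cce: "continuous_on I (cderiv c)" using cT by (simp add: T_def tangent_def[abs_def])
  have cEta: "continuous_on I (\<lambda>u. ruling Fs (- u))"
    by (rule continuous_on_compose2[OF dsFs(1)]) (use Isym in \<open>auto intro!: continuous_intros\<close>)
  define K where "K = I \<times> I \<times> I"
  define h where "h = (\<lambda>p::real\<times>real\<times>real. cderiv c (fst p) \<bullet> cross3 (ruling F (fst (snd p))) (ruling Fs (- snd (snd p))))"
  have c1: "continuous_on K (\<lambda>p::real\<times>real\<times>real. cderiv c (fst p))"
    by (rule continuous_on_compose2[OF cce]) (auto simp: K_def intro!: continuous_intros)
  have c2: "continuous_on K (\<lambda>p::real\<times>real\<times>real. ruling F (fst (snd p)))"
    by (rule continuous_on_compose2[OF dsF(1)]) (auto simp: K_def intro!: continuous_intros)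
  have c3: "continuous_on K (\<lambda>p::real\<times>real\<times>real. ruling Fs (- snd (snd p)))"
    by (rule continuous_on_compose2[OF cEta, of K "\<lambda>p. snd (snd p)"]) (auto simp: K_def intro!: continuous_intros)
  have ch: "continuous_on K h" unfolding h_def by (intro continuous_on_inner continuous_on_cross c1 c2 c3)
  have cK3: "compact K" unfolding K_def by (intro compact_Times cI)
  have hD: "\<And>s. h (s, s, s) = D s" by (simp add: h_def D_def T_def tangent_def)
  have cD: "continuous_on I (\<lambda>s. \<bar>D s\<bar>)"
  proof -
    have "continuous_on I (\<lambda>s. h (s, s, s))"
      by (rule continuous_on_compose2[OF ch]) (auto simp: K_def intro!: continuous_intros)
    then show ?thesis using hD by (auto intro!: continuous_intros)
  qed
  obtain s0 where s0: "s0 \<in> I" "\<forall>s\<in>I. \<bar>D s0\<bar> \<le> \<bar>D s\<bar>"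
    using continuous_attains_inf[OF cI Ine cD] by blast
  define m where "m = \<bar>D s0\<bar>"
  have m: "m > 0" "\<And>s. s \<in> I \<Longrightarrow> m \<le> \<bar>D s\<bar>" using s0 Dnz by (auto simp: m_def)
  obtain dd where dd: "dd > 0" "\<forall>x\<in>K. \<forall>x'\<in>K. dist x' x < dd \<longrightarrow> dist (h x') (h x) < m"
    using compact_uniformly_continuous[OF ch cK3] m(1) unfolding uniformly_continuous_on_def by blast
  define \<delta>1 where "\<delta>1 = dd / 2"
  have \<delta>1: "\<delta>1 > 0" using dd by (simp add: \<delta>1_def)
  have hnz: "\<And>r s u. r \<in> I \<Longrightarrow> s \<in> I \<Longrightarrow> u \<in> I \<Longrightarrow> \<bar>r - s\<bar> < \<delta>1 \<Longrightarrow> \<bar>u - s\<bar> < \<delta>1 \<Longrightarrow> h (r, s, u) \<noteq> 0"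
  proof
    fix r s u assume rsu: "r \<in> I" "s \<in> I" "u \<in> I" "\<bar>r - s\<bar> < \<delta>1" "\<bar>u - s\<bar> < \<delta>1" and h0: "h (r, s, u) = 0"
    have "dist (r, s, u) (s, s, s) = norm (r - s, 0::real, u - s)" by (simp add: dist_norm)
    also have "\<dots> \<le> norm (r - s) + norm (0::real, u - s)" by (rule norm_Pair_le)
    also have "\<dots> \<le> norm (r - s) + (norm (0::real) + norm (u - s))" using norm_Pair_le[of "0::real" "u - s"] by simp
    also have "\<dots> < dd" using rsu by (simp add: \<delta>1_def)
    finally have "dist (r, s, u) (s, s, s) < dd" .
    then have "dist (h (r, s, u)) (h (s, s, s)) < m" using dd(2) rsu by (auto simp: K_def)
    then have "\<bar>D s\<bar> < m" using h0 hD by (simp add: dist_real_def)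
    then show False using m(2)[OF rsu(2)] by simp
  qed
  obtain \<mu> where \<mu>: "\<mu> > 0" "\<forall>s\<in>I. \<forall>u\<in>I. \<delta>1 \<le> \<bar>s - u\<bar> \<longrightarrow> \<mu> \<le> norm (c s - c u)"
  proof -
    define K2 where "K2 = (I \<times> I) \<inter> {p. \<delta>1 \<le> \<bar>fst p - snd p\<bar>}"
    show ?thesis
    proof (cases "K2 = {}")
      case True
      have "\<forall>s\<in>I. \<forall>u\<in>I. \<not> \<delta>1 \<le> \<bar>s - u\<bar>"
      proof (intro ballI notI)
        fix s u assume "s \<in> I" "u \<in> I" "\<delta>1 \<le> \<bar>s - u\<bar>"
        then have "(s, u) \<in> K2" by (simp add: K2_def)
        then show False using True by simp
      qed
      then show ?thesis using that[of 1] by auto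
    next
      case False
      have "compact K2" unfolding K2_def
        by (intro compact_Int_closed compact_Times cI closed_Collect_le continuous_intros)
      moreover have "continuous_on K2 (\<lambda>p. norm (c (fst p) - c (snd p)))"
      proof -
        have cc: "continuous_on I c" by (rule continuous_on_subset[OF smooth_D(3)[OF sm zS]]) (use IS in auto)
        have "continuous_on K2 (\<lambda>p. c (fst p))"
          by (rule continuous_on_compose2[OF cc]) (auto simp: K2_def intro!: continuous_intros)
        moreover have "continuous_on K2 (\<lambda>p. c (snd p))"
          by (rule continuous_on_compose2[OF cc]) (auto simp: K2_def intro!: continuous_intros)
        ultimately show ?thesis by (intro continuous_intros)
      qed
      ultimately obtain p0 where p0: "p0 \<in> K2" "\<forall>p\<in>K2. norm (c (fst p0) - c (snd p0)) \<le> norm (c (fst p) - c (snd p))"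
        using continuous_attains_inf[OF _ False] by blast
      have "fst p0 \<noteq> snd p0" using p0(1) \<delta>1 by (auto simp: K2_def)
      moreover have "fst p0 \<in> param_int l" "snd p0 \<in> param_int l" using p0(1) by (auto simp: K2_def I_def)
      ultimately have "c (fst p0) \<noteq> c (snd p0)" using assms(7) by (meson inj_onD)
      then have "norm (c (fst p0) - c (snd p0)) > 0" by simp
      moreover have "\<forall>s\<in>I. \<forall>u\<in>I. \<delta>1 \<le> \<bar>s - u\<bar> \<longrightarrow> norm (c (fst p0) - c (snd p0)) \<le> norm (c s - c u)"
      proof (intro ballI impI)
        fix s u assume "s \<in> I" "u \<in> I" "\<delta>1 \<le> \<bar>s - u\<bar>"
        then have "(s, u) \<in> K2" by (simp add: K2_def)
        then show "norm (c (fst p0) - c (snd p0)) \<le> norm (c s - c u)" using p0(2) by force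
      qed
      ultimately show ?thesis using that by blast
    qed
  qed
  define \<epsilon>0 where "\<epsilon>0 = min (min d1 d2) (\<mu> / 2)"
  have \<epsilon>0: "\<epsilon>0 > 0" using d1 d2 \<mu> by (simp add: \<epsilon>0_def)
  have part2: "\<forall>\<epsilon>. 0 < \<epsilon> \<and> \<epsilon> < \<epsilon>0 \<longrightarrow> F ` Omega l \<epsilon> \<inter> Fs ` Omega l \<epsilon> = c ` I"
  proof (intro allI impI)
    fix \<epsilon> :: real assume \<epsilon>: "0 < \<epsilon> \<and> \<epsilon> < \<epsilon>0"
    have Om: "\<And>s v. (s, v) \<in> Omega l \<epsilon> \<longleftrightarrow> s \<in> I \<and> \<bar>v\<bar> < \<epsilon>"
      by (auto simp: Omega_def I_def)
    show "F ` Omega l \<epsilon> \<inter> Fs ` Omega l \<epsilon> = c ` I"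
    proof
      show "c ` I \<subseteq> F ` Omega l \<epsilon> \<inter> Fs ` Omega l \<epsilon>"
      proof
        fix x assume "x \<in> c ` I"
        then obtain s where s: "s \<in> I" "x = c s" by blast
        have "x = F (s, 0)" "(s, 0) \<in> Omega l \<epsilon>" using s nfF(2) \<epsilon> Om by auto
        moreover have "x = Fs (-s, 0)" "(-s, 0) \<in> Omega l \<epsilon>" using s nfFs(2) Isym \<epsilon> Om by (auto simp: c'_def)
        ultimately show "x \<in> F ` Omega l \<epsilon> \<inter> Fs ` Omega l \<epsilon>" by blast
      qed
    next
      show "F ` Omega l \<epsilon> \<inter> Fs ` Omega l \<epsilon> \<subseteq> c ` I"
      proof
        fix x assume "x \<in> F ` Omega l \<epsilon> \<inter> Fs ` Omega l \<epsilon>"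
        then obtain s v t w where sv: "s \<in> I" "\<bar>v\<bar> < \<epsilon>" "x = F (s, v)" and tw: "t \<in> I" "\<bar>w\<bar> < \<epsilon>" "x = Fs (t, w)"
          using Om by force
        define u where "u = - t"
        have u: "u \<in> I" "t = - u" using tw Isym by (auto simp: u_def)
        have xF: "x = c s + v *\<^sub>R ruling F s" using sv d1 nfF(2) \<epsilon> by (simp add: \<epsilon>0_def)
        have xFs: "x = c u + w *\<^sub>R ruling Fs (- u)" using tw d2 nfFs(2) \<epsilon> u by (simp add: \<epsilon>0_def c'_def)
        have nxi: "norm (ruling F s) = 1" using dsF(2) sv by blast
        have neta: "norm (ruling Fs (- u)) = 1" using dsFs(2) u Isym by blast
        have cdiff: "c s - c u = w *\<^sub>R ruling Fs (- u) - v *\<^sub>R ruling F s" using xF xFs by (simp add: algebra_simps)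
        show "x \<in> c ` I"
        proof (cases "s = u")
          case True
          then have "v *\<^sub>R ruling F s + (- w) *\<^sub>R ruling Fs (- s) = 0" using cdiff by simp
          then have "v = 0" using part1 sv by blast
          then show ?thesis using xF sv by simp
        next
          case False
          show ?thesis
          proof (cases "\<delta>1 \<le> \<bar>s - u\<bar>")
            case True
            then have "\<mu> \<le> norm (c s - c u)" using \<mu> sv u by blast
            also have "\<dots> \<le> norm (w *\<^sub>R ruling Fs (- u)) + norm (v *\<^sub>R ruling F s)" unfolding cdiff by (rule norm_triangle_ineq4)
            also have "\<dots> = \<bar>w\<bar> + \<bar>v\<bar>" using nxi neta by simp
            also have "\<dots> < 2 * \<epsilon>" using sv tw by simp
            also have "\<dots> \<le> \<mu>" using \<epsilon> by (simp add: \<epsilon>0_def)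
            finally show ?thesis by simp
          next
            case False
            define N where "N = cross3 (ruling F s) (ruling Fs (- u))"
            have z: "c s \<bullet> N - c u \<bullet> N = 0"
            proof -
              have "c s \<bullet> N - c u \<bullet> N = (c s - c u) \<bullet> N" by (simp add: inner_diff_left)
              also have "\<dots> = 0" unfolding cdiff N_def by (simp add: inner_diff_left dot_cross_self)
              finally show ?thesis .
            qed
            define a where "a = min s u"
            define b where "b = max s u"
            have ab2: "a < b" using \<open>s \<noteq> u\<close> by (simp add: a_def b_def)
            have abI: "\<And>x. a \<le> x \<Longrightarrow> x \<le> b \<Longrightarrow> x \<in> I" using sv u by (auto simp: a_def b_def I_eq)
            have der: "\<And>x. a \<le> x \<Longrightarrow> x \<le> b \<Longrightarrow> (c has_vector_derivative cderiv c x) (at x)"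
              using smooth_D(1)[OF sm] abI IS by blast
            obtain r where r: "a < r" "r < b" "c b \<bullet> N - c a \<bullet> N = (b - a) * (cderiv c r \<bullet> N)"
              using mvt_dot[OF ab2 der] by blast
            have "c b \<bullet> N - c a \<bullet> N = 0" using z by (cases "s \<le> u") (auto simp: a_def b_def)
            then have "cderiv c r \<bullet> N = 0" using r(3) ab2 by simp
            then have "h (r, s, u) = 0" by (simp add: h_def N_def)
            moreover have "r \<in> I" using abI r by simp
            moreover have "\<bar>r - s\<bar> < \<delta>1" "\<bar>u - s\<bar> < \<delta>1" using False r by (auto simp: a_def b_def)
            ultimately show ?thesis using hnz sv u by blast
          qed
        qed
      qed
    qed
  qed
  show ?thesis using part1 part2 \<epsilon>0 by (auto simp: I_def)
qed

end
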